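(* Let $\Pi$ be a max-FGPP with constants satisfying $\frac{\alpha_1}{2}\ge\alpha_2$. Let $\mathcal{I}=(G=(V,E),k,p)$ be an instance of $\Pi$ and define the instance $f(\mathcal{I})=(U,\mathcal{S},w,k',p')$ of the maximization version of $k'$-WEC by: $U=V$; $\mathcal{S}=\bigcup_{i=1}^k\mathcal{S}_i$, where $\mathcal{S}_i$ is the family of node-sets of connected subgraphs of $G$ on exactly $i$ nodes; $w(S)=\mathrm{val}(S)$ for all $S\in\mathcal{S}$; $k'=k$ and $p'=p$. Then $\mathcal{I}$ is a yes-instance of $\Pi$ if and only if $f(\mathcal{I})$ is a yes-instance of the maximization version of $k'$-WEC.
   Context: Graphs are finite, simple and undirected. For $G=(V,E)$ and $X\subseteq V$, $E(X)$ is the set of edges with both endpoints in $X$, $E(X,V\setminus X)$ the set of edges with exactly one endpoint in $X$, and $\mathrm{val}(X)=\alpha_1|E(X)|+\alpha_2|E(X,V\setminus X)|$. The max-FGPP $\Pi$ defined by $\alpha_1,\alpha_2\in\mathbb{R}$: given $G=(V,E)$, $k\in\mathbb{N}$ and $p\in\mathbb{R}$, decide whether there is $X\subseteq V$ with $|X|=k$ and $\mathrm{val}(X)\ge p$. Maximization version of Weighted $k'$-Exact Cover ($k'$-WEC): given a universe $U$, a family $\mathcal{S}$ of nonempty subsets of $U$, a function $w:\mathcal{S}\to\mathbb{R}$, $k'\in\mathbb{N}$ and $p'\in\mathbb{R}$, decide whether there is a subfamily $\mathcal{S}'\subseteq\mathcal{S}$ of pairwise disjoint sets with $|\bigcup\mathcal{S}'|=k'$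 and $\sum_{S\in\mathcal{S}'}w(S)\ge p'$. *)

theory Defs
  imports Complex_Main
begin

definition simple_graph :: "'a set \<Rightarrow> 'a set set \<Rightarrow> bool" where
  "simple_graph V E \<longleftrightarrow> finite V \<and>
     (\<forall>e\<in>E. \<exists>u v. e = {u, v} \<and> u \<noteq> v \<and> u \<in> V \<and> v \<in> V)"

definition inner_edges :: "'a set set \<Rightarrow> 'a set \<Rightarrow> 'a set set" where
  "inner_edges E X = {e \<in> E. e \<subseteq> X}"

definition cut_edges :: "'a set set \<Rightarrow> 'a set \<Rightarrow> 'a set set" where
  "cut_edges E X = {e \<in> E. card (e \<inter> X) = 1}"

definition val :: "real \<Rightarrow> real \<Rightarrow> 'a set set \<Rightarrow> 'a set \<Rightarrow> real" where
  "val a1 a2 E X = a1 * real (card (inner_edges E X)) + a2 * real (card (cut_edges E X))"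

definition fgpp_yes :: "real \<Rightarrow> real \<Rightarrow> 'a set \<Rightarrow> 'a set set \<Rightarrow> nat \<Rightarrow> real \<Rightarrow> bool" where
  "fgpp_yes a1 a2 V E k p \<longleftrightarrow> (\<exists>X. X \<subseteq> V \<and> card X = k \<and> val a1 a2 E X \<ge> p)"

definition induces_connected :: "'a set set \<Rightarrow> 'a set \<Rightarrow> bool" where
  "induces_connected E S \<longleftrightarrow> S \<noteq> {} \<and>
     (\<forall>u\<in>S. \<forall>v\<in>S. (u, v) \<in> (Restr {(x, y). {x, y} \<in> E} S)\<^sup>*)"

definition conn_sets :: "'a set \<Rightarrow> 'a set set \<Rightarrow> nat \<Rightarrow> 'a set set" where
  "conn_sets V E i = {S. S \<subseteq> V \<and> card S = i \<and> induces_connected E S}"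

definition wec_family :: "'a set \<Rightarrow> 'a set set \<Rightarrow> nat \<Rightarrow> 'a set set" where
  "wec_family V E k = (\<Union>i\<in>{1..k}. conn_sets V E i)"

definition wec_yes :: "'a set \<Rightarrow> 'a set set \<Rightarrow> ('a set \<Rightarrow> real) \<Rightarrow> nat \<Rightarrow> real \<Rightarrow> bool" where
  "wec_yes U \<S> w k' p' \<longleftrightarrow> (\<exists>\<S>'. \<S>' \<subseteq> \<S> \<and>
      (\<forall>A\<in>\<S>'. \<forall>B\<in>\<S>'. A \<noteq> B \<longrightarrow> A \<inter> B = {}) \<and>
      card (\<Union>\<S>') = k' \<and> (\<Sum>S\<in>\<S>'. w S) \<ge> p')"

end

theory Submission
  imports Defs
begin

definition hh :: "real \<Rightarrow> real \<Rightarrow> 'a set \<Rightarrow> 'a set \<Rightarrow> real" where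
  "hh a1 a2 e S = a1 * (if e \<subseteq> S then 1 else 0) + a2 * (if card (e \<inter> S) = 1 then 1 else 0)"

lemma card_filter_sum: "finite A \<Longrightarrow> real (card {x\<in>A. Q x}) = (\<Sum>x\<in>A. if Q x then 1 else 0)"
proof -
  assume "finite A"
  have "real (card {x\<in>A. Q x}) = (\<Sum>x\<in>{x\<in>A. Q x}. 1)" by (rule real_of_card)
  also have "\<dots> = (\<Sum>x\<in>A. if Q x then 1 else 0)" using \<open>finite A\<close> by (rule sum.inter_filter)
  finally show ?thesis .
qed

lemma val_sum: "finite E \<Longrightarrow> val a1 a2 E S = (\<Sum>e\<in>E. hh a1 a2 e S)"
  unfolding val_def hh_def inner_edges_def cut_edges_def
  by (simp only: card_filter_sum sum.distrib sum_distrib_left)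

lemma sum_unique:
  assumes "finite P" "\<forall>S\<in>P. \<forall>T\<in>P. Q S \<longrightarrow> Q T \<longrightarrow> S = T"
  shows "(\<Sum>S\<in>P. if Q S then 1 else 0 :: real) = (if \<exists>S\<in>P. Q S then 1 else 0)"
proof (cases "\<exists>S\<in>P. Q S")
  case True
  then obtain S0 where S0: "S0 \<in> P" "Q S0" by blast
  have "(\<Sum>S\<in>P. if Q S then 1 else 0 :: real) = (\<Sum>S\<in>P. if S0 = S then 1 else 0)"
    by (rule sum.cong) (use assms S0 in auto)
  also have "\<dots> = 1" using assms(1) S0 by (simp add: sum.delta)
  finally show ?thesis using True by simp
next
  case False
  then show ?thesis by simp
qed

lemma hh_pair:
  assumes "u \<noteq> v"
  shows "hh a1 a2 {u,v} S = a1 * (if u \<in> S \<and> v \<in> S then 1 else 0)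
     + a2 * ((if u \<in> S then 1 else 0) + (if v \<in> S then 1 else 0) - 2 * (if u \<in> S \<and> v \<in> S then 1 else 0))"
  using assms unfolding hh_def by (cases "u \<in> S"; cases "v \<in> S") auto

lemma edge_sum:
  assumes "u \<noteq> v" "finite P" and disj: "\<forall>A\<in>P. \<forall>B\<in>P. A \<noteq> B \<longrightarrow> A \<inter> B = {}"
    and a: "a1 / 2 \<ge> a2"
  shows "(\<Sum>S\<in>P. hh a1 a2 {u,v} S) \<le> hh a1 a2 {u,v} (\<Union>P)"
    and "(\<forall>S\<in>P. \<forall>T\<in>P. u \<in> S \<longrightarrow> v \<in> T \<longrightarrow> S = T) \<Longrightarrow>
         (\<Sum>S\<in>P. hh a1 a2 {u,v} S) = hh a1 a2 {u,v} (\<Union>P)"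
proof -
  have su: "(\<Sum>S\<in>P. if u \<in> S then 1 else 0 :: real) = (if \<exists>S\<in>P. u \<in> S then 1 else 0)"
    by (rule sum_unique) (use assms in blast)+
  have sv: "(\<Sum>S\<in>P. if v \<in> S then 1 else 0 :: real) = (if \<exists>S\<in>P. v \<in> S then 1 else 0)"
    by (rule sum_unique) (use assms in blast)+
  have sb: "(\<Sum>S\<in>P. if u \<in> S \<and> v \<in> S then 1 else 0 :: real) = (if \<exists>S\<in>P. u \<in> S \<and> v \<in> S then 1 else 0)"
    by (rule sum_unique) (use assms in blast)+
  have L: "(\<Sum>S\<in>P. hh a1 a2 {u,v} S) = a1 * (if \<exists>S\<in>P. u \<in> S \<and> v \<in> S then 1 else 0)
     + a2 * ((if \<exists>S\<in>P. u \<in> S then 1 else 0) + (if \<exists>S\<in>P. v \<in> S then 1 else 0)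
        - 2 * (if \<exists>S\<in>P. u \<in> S \<and> v \<in> S then 1 else 0))"
  proof -
    have "(\<Sum>S\<in>P. hh a1 a2 {u,v} S) = (\<Sum>S\<in>P. a1 * (if u \<in> S \<and> v \<in> S then 1 else 0)
     + a2 * (if u \<in> S then 1 else 0) + a2 * (if v \<in> S then 1 else 0) - (2 * a2) * (if u \<in> S \<and> v \<in> S then 1 else 0))"
      by (rule sum.cong[OF refl]) (simp add: hh_pair[OF assms(1)] algebra_simps)
    also have "\<dots> = a1 * (\<Sum>S\<in>P. if u \<in> S \<and> v \<in> S then 1 else 0)
     + a2 * (\<Sum>S\<in>P. if u \<in> S then 1 else 0) + a2 * (\<Sum>S\<in>P. if v \<in> S then 1 else 0) - (2 * a2) * (\<Sum>S\<in>P. if u \<in> S \<and> v \<in> S then 1 else 0)"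
      by (simp only: sum_subtractf sum.distrib sum_distrib_left[symmetric])
    finally show ?thesis unfolding su sv sb by (simp add: algebra_simps)
  qed
  have R: "hh a1 a2 {u,v} (\<Union>P) = a1 * (if (\<exists>S\<in>P. u \<in> S) \<and> (\<exists>S\<in>P. v \<in> S) then 1 else 0)
     + a2 * ((if \<exists>S\<in>P. u \<in> S then 1 else 0) + (if \<exists>S\<in>P. v \<in> S then 1 else 0)
        - 2 * (if (\<exists>S\<in>P. u \<in> S) \<and> (\<exists>S\<in>P. v \<in> S) then 1 else 0))"
    unfolding hh_pair[OF assms(1)] by simp
  show "(\<Sum>S\<in>P. hh a1 a2 {u,v} S) \<le> hh a1 a2 {u,v} (\<Union>P)"
    unfolding L R using a by (auto split: if_splits)
  show "(\<forall>S\<in>P. \<forall>T\<in>P. u \<in> S \<longrightarrow> v \<in> T \<longrightarrow> S = T) \<Longrightarrow>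
         (\<Sum>S\<in>P. hh a1 a2 {u,v} S) = hh a1 a2 {u,v} (\<Union>P)"
    unfolding L R by (auto split: if_splits)
qed

lemma main_sum:
  assumes "finite E" "\<forall>e\<in>E. \<exists>u v. e = {u, v} \<and> u \<noteq> v" "finite P"
    and disj: "\<forall>A\<in>P. \<forall>B\<in>P. A \<noteq> B \<longrightarrow> A \<inter> B = {}" and a: "a1 / 2 \<ge> a2"
  shows "(\<Sum>S\<in>P. val a1 a2 E S) \<le> val a1 a2 E (\<Union>P)"
    and "(\<forall>e\<in>E. \<forall>S\<in>P. \<forall>T\<in>P. e \<inter> S \<noteq> {} \<longrightarrow> e \<inter> T \<noteq> {} \<longrightarrow> S = T) \<Longrightarrow>
         (\<Sum>S\<in>P. val a1 a2 E S) = val a1 a2 E (\<Union>P)"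
proof -
  have sw: "(\<Sum>S\<in>P. val a1 a2 E S) = (\<Sum>e\<in>E. \<Sum>S\<in>P. hh a1 a2 e S)"
  proof -
    have "(\<Sum>S\<in>P. val a1 a2 E S) = (\<Sum>S\<in>P. \<Sum>e\<in>E. hh a1 a2 e S)"
      using assms(1) by (simp add: val_sum)
    also have "\<dots> = (\<Sum>e\<in>E. \<Sum>S\<in>P. hh a1 a2 e S)" by (rule sum.swap)
    finally show ?thesis .
  qed
  show "(\<Sum>S\<in>P. val a1 a2 E S) \<le> val a1 a2 E (\<Union>P)"
    unfolding sw val_sum[OF assms(1), where S="\<Union>P"]
  proof (rule sum_mono)
    fix e assume "e \<in> E"
    then obtain u v where uv: "e = {u,v}" "u \<noteq> v" using assms(2) by blast
    show "(\<Sum>S\<in>P. hh a1 a2 e S) \<le> hh a1 a2 e (\<Union>P)"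
      unfolding uv(1) by (rule edge_sum(1)[OF uv(2) assms(3) disj a])
  qed
  assume nc: "\<forall>e\<in>E. \<forall>S\<in>P. \<forall>T\<in>P. e \<inter> S \<noteq> {} \<longrightarrow> e \<inter> T \<noteq> {} \<longrightarrow> S = T"
  show "(\<Sum>S\<in>P. val a1 a2 E S) = val a1 a2 E (\<Union>P)"
    unfolding sw val_sum[OF assms(1), where S="\<Union>P"]
  proof (rule sum.cong[OF refl])
    fix e assume "e \<in> E"
    then obtain u v where uv: "e = {u,v}" "u \<noteq> v" using assms(2) by blast
    have "\<forall>S\<in>P. \<forall>T\<in>P. u \<in> S \<longrightarrow> v \<in> T \<longrightarrow> S = T"
    proof (intro ballI impI)
      fix S T assume ST: "S \<in> P" "T \<in> P" "u \<in> S" "v \<in> T"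
      then have "e \<inter> S \<noteq> {}" "e \<inter> T \<noteq> {}" using uv(1) by blast+
      then show "S = T" using nc \<open>e \<in> E\<close> ST(1,2) by blast
    qed
    then show "(\<Sum>S\<in>P. hh a1 a2 e S) = hh a1 a2 e (\<Union>P)"
      unfolding uv(1) by (rule edge_sum(2)[OF uv(2) assms(3) disj a])
  qed
qed

theorem lemma1:
  fixes a1 a2 :: real and V :: "'a set" and E :: "'a set set" and k :: nat and p :: real
  assumes "simple_graph V E"
    and "a1 / 2 \<ge> a2"
  shows "fgpp_yes a1 a2 V E k p \<longleftrightarrow> wec_yes V (wec_family V E k) (val a1 a2 E) k p"
proof -
  have fV: "finite V" and edg: "\<forall>e\<in>E. \<exists>u v. e = {u, v} \<and> u \<noteq> v \<and> u \<in> V \<and> v \<in> V"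
    using assms(1) unfolding simple_graph_def by blast+
  have EV: "E \<subseteq> Pow V"
  proof
    fix e assume "e \<in> E"
    from bspec[OF edg this] obtain u v where "e = {u, v}" "u \<in> V" "v \<in> V" by blast
    then show "e \<in> Pow V" by simp
  qed
  have fE: "finite E" by (rule finite_subset[OF EV]) (simp add: fV)
  have edg2: "\<forall>e\<in>E. \<exists>u v. e = {u, v} \<and> u \<noteq> v"
  proof
    fix e assume "e \<in> E"
    from bspec[OF edg this] obtain u v where "e = {u, v}" "u \<noteq> v" by blast
    then show "\<exists>u v. e = {u, v} \<and> u \<noteq> v" by blast
  qed
  show ?thesis
  proof
    assume "fgpp_yes a1 a2 V E k p"
    then obtain X where X: "X \<subseteq> V" "card X = k" "val a1 a2 E X \<ge> p"
      unfolding fgpp_yes_def by blast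
    have fX: "finite X" using X(1) fV finite_subset by blast
    define R0 where "R0 = {(x, y). {x, y} \<in> E}"
    define R where "R = Restr R0 X"
    define comp where "comp v = {u\<in>X. (v, u) \<in> R\<^sup>*}" for v
    define P where "P = comp ` X"
    have symR0: "sym (Restr R0 C)" for C
      unfolding R0_def sym_def by (auto simp: insert_commute)
    have symR: "(y, x) \<in> R\<^sup>*" if "(x, y) \<in> R\<^sup>*" for x y
      using sym_rtrancl[OF symR0[of X]] that unfolding R_def by (rule symD)
    have comp_eq: "comp w = comp v" if "w \<in> comp v" for v w
    proof -
      have vw: "(v, w) \<in> R\<^sup>*" using that unfolding comp_def by blast
      then have wv: "(w, v) \<in> R\<^sup>*" by (rule symR)
      show ?thesis unfolding comp_def using rtrancl_trans[OF vw] rtrancl_trans[OF wv] by blast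
    qed
    have compX: "comp v \<subseteq> X" for v unfolding comp_def by blast
    have self: "v \<in> comp v" if "v \<in> X" for v unfolding comp_def using that by blast
    have disj: "\<forall>A\<in>P. \<forall>B\<in>P. A \<noteq> B \<longrightarrow> A \<inter> B = {}"
    proof (intro ballI impI)
      fix A B assume "A \<in> P" "B \<in> P" "A \<noteq> B"
      then obtain a b where ab: "A = comp a" "B = comp b" unfolding P_def by blast
      show "A \<inter> B = {}"
      proof (rule ccontr)
        assume "A \<inter> B \<noteq> {}"
        then obtain w where "w \<in> comp a" "w \<in> comp b" using ab by blast
        then have "comp a = comp b" using comp_eq by metis
        then show False using ab \<open>A \<noteq> B\<close> by simp
      qed
    qed
    have UP: "\<Union>P = X" unfolding P_def using compX self by blast
    have fP: "finite P" unfolding P_def using fX by simp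
    have conn: "induces_connected E (comp v)" if "v \<in> X" for v
    proof -
      let ?C = "comp v"
      have reach: "(v, u) \<in> (Restr R0 ?C)\<^sup>*" if "u \<in> ?C" for u
      proof -
        have "(v, u) \<in> R\<^sup>*" using that unfolding comp_def by blast
        then show ?thesis
        proof (induction rule: rtrancl_induct)
          case base then show ?case by simp
        next
          case (step y z)
          have yX: "y \<in> X" "z \<in> X" "(y, z) \<in> R0" using step(2) unfolding R_def by auto
          have "y \<in> ?C" using yX step(1) unfolding comp_def by blast
          moreover have "(v, z) \<in> R\<^sup>*" by (rule rtrancl_into_rtrancl[OF step(1) step(2)])
          then have "z \<in> ?C" using yX(2) unfolding comp_def by blast
          ultimately have "(y, z) \<in> Restr R0 ?C" using yX by blast
          then show ?case by (rule rtrancl_into_rtrancl[OF step(3)])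
        qed
      qed
      have "(u, w) \<in> (Restr R0 ?C)\<^sup>*" if "u \<in> ?C" "w \<in> ?C" for u w
      proof -
        have "(u, v) \<in> (Restr R0 ?C)\<^sup>*"
          using sym_rtrancl[OF symR0[of ?C]] reach[OF that(1)] by (rule symD)
        then show ?thesis using reach[OF that(2)] by (rule rtrancl_trans)
      qed
      then show ?thesis unfolding induces_connected_def R0_def[symmetric] using self[OF that] by blast
    qed
    have Pfam: "P \<subseteq> wec_family V E k"
    proof
      fix S assume "S \<in> P"
      then obtain v where v: "v \<in> X" "S = comp v" unfolding P_def by blast
      have fS: "finite S" using v compX fX finite_subset by metis
      have "S \<noteq> {}" using self[OF v(1)] v(2) by blast
      then have "card S \<ge> 1" using fS by (simp add: Suc_le_eq card_gt_0_iff)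
      moreover have "card S \<le> k" using X(2) card_mono[OF fX compX] v(2) by simp
      moreover have "S \<subseteq> V" using v compX X(1) by blast
      ultimately show "S \<in> wec_family V E k"
        unfolding wec_family_def conn_sets_def using conn[OF v(1)] v(2) by (intro UN_I[of "card S"]) auto
    qed
    have nc: "\<forall>e\<in>E. \<forall>S\<in>P. \<forall>T\<in>P. e \<inter> S \<noteq> {} \<longrightarrow> e \<inter> T \<noteq> {} \<longrightarrow> S = T"
    proof (intro ballI impI)
      fix e S T assume e: "e \<in> E" and ST: "S \<in> P" "T \<in> P" "e \<inter> S \<noteq> {}" "e \<inter> T \<noteq> {}"
      obtain a where a: "a \<in> e" "a \<in> S" using ST by blast
      obtain b where b: "b \<in> e" "b \<in> T" using ST by blast
      show "S = T"
      proof (cases "a = b")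
        case True then show ?thesis using disj ST a b by blast
      next
        case False
        obtain x y where xy: "e = {x, y}" "x \<noteq> y" using edg2 e by blast
        have eab: "e = {a, b}" using xy a b False by blast
        obtain s where s: "s \<in> X" "S = comp s" using ST unfolding P_def by blast
        obtain t where t: "t \<in> X" "T = comp t" using ST unfolding P_def by blast
        have aX: "a \<in> X" "b \<in> X" using a b s t compX by blast+
        have "(a, b) \<in> R" unfolding R_def R0_def using eab e aX by auto
        then have "b \<in> comp a" unfolding comp_def using aX by blast
        then have "comp b = comp a" by (rule comp_eq)
        moreover have "comp a = S" using comp_eq a s by blast
        moreover have "comp b = T" using comp_eq b t by blast
        ultimately show ?thesis by simp
      qed
    qed
    have "(\<Sum>S\<in>P. val a1 a2 E S) = val a1 a2 E X"
      using main_sum(2)[OF fE edg2 fP disj assms(2) nc] UP by simp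
    then show "wec_yes V (wec_family V E k) (val a1 a2 E) k p"
      unfolding wec_yes_def using Pfam disj UP X by (intro exI[of _ P] conjI) simp_all
  next
    assume "wec_yes V (wec_family V E k) (val a1 a2 E) k p"
    then obtain S' where S': "S' \<subseteq> wec_family V E k" "\<forall>A\<in>S'. \<forall>B\<in>S'. A \<noteq> B \<longrightarrow> A \<inter> B = {}"
      "card (\<Union>S') = k" "(\<Sum>S\<in>S'. val a1 a2 E S) \<ge> p"
      unfolding wec_yes_def by blast
    have "wec_family V E k \<subseteq> Pow V" unfolding wec_family_def conn_sets_def by blast
    then have sub: "S' \<subseteq> Pow V" using S'(1) by blast
    then have fS: "finite S'" by (rule finite_subset) (simp add: fV)
    have "\<Union>S' \<subseteq> V" using sub by blast
    moreover have "val a1 a2 E (\<Union>S') \<ge> p"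
      using main_sum(1)[OF fE edg2 fS S'(2) assms(2)] S'(4) by linarith
    ultimately show "fgpp_yes a1 a2 V E k p" unfolding fgpp_yes_def using S'(3) by blast
  qed
qed

end
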